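(* For all $n,d,w\in\mathbb{N}$, $B_3(n,d,w)=A_2(n,d,w)$.
   Context: Notation: $\mathbb{F}_2=\{0,1\}$. For a code $S\subseteq\mathbb{F}_2^n$, $d_{\min}(S)$ is the minimum Hamming distance between distinct words of $S$ ($+\infty$ if $|S|\le 1$). Let $F\subseteq\mathbb{F}_2^n$ be the set of words of weight $w$. For $k\in\mathbb{Z}_{\ge 0}$, $\mathcal{C}_k$ is the set of codes $C\subseteq F$ with $|C|\le k$. For $j\le k$ and $D\in\mathcal{C}_j$, $\mathcal{C}_j(D):=\{C\in\mathcal{C}_j : C\supseteq D,\ |D|+2|C\setminus D|\le j\}$. For $x:\mathcal{C}_k\to\mathbb{R}$, $M_{j,D}(x)$ is the $\mathcal{C}_j(D)\times\mathcal{C}_j(D)$ matrix with entries $x(C\cup C')$. $A_k(n,d,w)$ is the supremum of $\sum_{v\in F}x(\{v\})$ over all $x:\mathcal{C}_k\to\mathbb{R}$ with $x(\emptyset)=1$, $x(S)=0$ whenever $d_{\min}(S)<d$, and $M_{k,D}(x)$ positive semidefinite for every $D\in\mathcal{C}_k$. For $k\ge 3$, $B_k(n,d,w)$ is the supremum of $\sum_{v\in F}x(\{v\})$ over all $x:\mathcal{C}_k\to\mathbb{R}$ with $x(\emptyset)=1$, $x(S)=0$ whenever $d_{\min}(S)<d$, $M_{k-1,D}(x)$ positive semidefinite for every $D\in\mathcal{C}_{k-1}$ with $|D|<2$, and $M_{k,D}(x)$ positive semidefinite for every $D\in\mathcal{C}_k$ with $|D|\ge 2$. *)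

theory Defs
  imports Complex_Main "HOL-Library.Extended_Nat" "HOL-Library.Extended_Real"
begin

text \<open>A binary word of length n (an element of F_2^n) is represented by its support,
  a subset of {0..<n}.\<close>

definition hamming :: "nat set \<Rightarrow> nat set \<Rightarrow> nat" where
  "hamming u v = card ((u - v) \<union> (v - u))"

definition words :: "nat \<Rightarrow> nat \<Rightarrow> nat set set" where
  "words n w = {v. v \<subseteq> {..<n} \<and> card v = w}"

text \<open>Minimum distance, +infinity if the code has at most one word.\<close>
definition dmin :: "nat set set \<Rightarrow> enat" where
  "dmin S = (INF p \<in> {(u, v). u \<in> S \<and> v \<in> S \<and> u \<noteq> v}. enat (hamming (fst p) (snd p)))"

definition codes :: "nat \<Rightarrow> nat \<Rightarrow> nat \<Rightarrow> nat set set set" where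
  "codes n w k = {C. C \<subseteq> words n w \<and> card C \<le> k}"

definition codes_D :: "nat \<Rightarrow> nat \<Rightarrow> nat \<Rightarrow> nat set set \<Rightarrow> nat set set set" where
  "codes_D n w j D = {C \<in> codes n w j. D \<subseteq> C \<and> card D + 2 * card (C - D) \<le> j}"

definition psd_on :: "'a set \<Rightarrow> ('a \<Rightarrow> 'a \<Rightarrow> real) \<Rightarrow> bool" where
  "psd_on I M \<longleftrightarrow> (\<forall>i\<in>I. \<forall>j\<in>I. M i j = M j i) \<and>
     (\<forall>c :: 'a \<Rightarrow> real. 0 \<le> (\<Sum>i\<in>I. \<Sum>j\<in>I. c i * M i j * c j))"

definition moment_psd :: "nat \<Rightarrow> nat \<Rightarrow> nat \<Rightarrow> nat set set \<Rightarrow> (nat set set \<Rightarrow> real) \<Rightarrow> bool" where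
  "moment_psd n w j D x \<longleftrightarrow> psd_on (codes_D n w j D) (\<lambda>C C'. x (C \<union> C'))"

definition base_feasible :: "nat \<Rightarrow> nat \<Rightarrow> nat \<Rightarrow> nat \<Rightarrow> (nat set set \<Rightarrow> real) \<Rightarrow> bool" where
  "base_feasible k n d w x \<longleftrightarrow> x {} = 1 \<and>
     (\<forall>S \<in> codes n w k. dmin S < enat d \<longrightarrow> x S = 0)"

definition objective :: "nat \<Rightarrow> nat \<Rightarrow> (nat set set \<Rightarrow> real) \<Rightarrow> ereal" where
  "objective n w x = ereal (\<Sum>v \<in> words n w. x {v})"

definition A_bound :: "nat \<Rightarrow> nat \<Rightarrow> nat \<Rightarrow> nat \<Rightarrow> ereal" where
  "A_bound k n d w = Sup (objective n w ` {x. base_feasible k n d w x \<and>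
       (\<forall>D \<in> codes n w k. moment_psd n w k D x)})"

definition B_bound :: "nat \<Rightarrow> nat \<Rightarrow> nat \<Rightarrow> nat \<Rightarrow> ereal" where
  "B_bound k n d w = Sup (objective n w ` {x. base_feasible k n d w x \<and>
       (\<forall>D \<in> codes n w (k - 1). card D < 2 \<longrightarrow> moment_psd n w (k - 1) D x) \<and>
       (\<forall>D \<in> codes n w k. 2 \<le> card D \<longrightarrow> moment_psd n w k D x)})"

end

theory Submission
  imports Defs
begin

lemma words_finite: "finite (words n w)"
proof -
  have "words n w \<subseteq> Pow {..<n}" by (auto simp: words_def)
  thus ?thesis by (rule finite_subset) simp
qed

lemma codes_finite: "C \<in> codes n w k \<Longrightarrow> finite C"
  unfolding codes_def using words_finite finite_subset by blast

lemma codesD_card: 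
  assumes "C \<in> codes_D n w j D" "C' \<in> codes_D n w j D"
  shows "card (C \<union> C') \<le> j"
proof -
  have s: "D \<subseteq> C" "D \<subseteq> C'" "card D + 2 * card (C - D) \<le> j" "card D + 2 * card (C' - D) \<le> j"
    using assms unfolding codes_D_def by blast+
  have e: "C \<union> C' = D \<union> (C - D) \<union> (C' - D)" using s(1,2) by blast
  have "card (D \<union> (C - D) \<union> (C' - D)) \<le> card D + card (C - D) + card (C' - D)"
    by (meson add_le_mono card_Un_le order_refl order_trans)
  hence "card (C \<union> C') \<le> card D + card (C - D) + card (C' - D)" by (subst e)
  thus ?thesis using s by linarith
qed
lemma codesD_single:
  assumes "C \<in> codes_D n w j D" "j < card D + 2"
  shows "C = D"
proof -
  have "C \<subseteq> words n w" using assms(1) unfolding codes_D_def codes_def by blast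
  hence f: "finite C" using words_finite by (rule finite_subset)
  have s: "D \<subseteq> C" "card D + 2 * card (C - D) \<le> j" using assms(1) unfolding codes_D_def by blast+
  hence "card (C - D) = 0" using assms(2) by linarith
  hence "C - D = {}" using f by simp
  thus ?thesis using s by blast
qed
lemma codesD_eq:
  assumes "D \<in> codes n w 2" "card D = 2"
  shows "codes_D n w 3 D = codes_D n w 2 D"
proof -
  have a: "codes_D n w 3 D \<subseteq> {D}" "codes_D n w 2 D \<subseteq> {D}"
    using codesD_single[where j=3 and D=D and n=n and w=w] codesD_single[where j=2 and D=D and n=n and w=w] assms(2) by auto
  have "D \<in> codes_D n w 3 D" "D \<in> codes_D n w 2 D"
    using assms by (auto simp: codes_D_def codes_def)
  thus ?thesis using a by blast
qed

lemma psd_cong: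
  assumes "\<And>i j. i \<in> I \<Longrightarrow> j \<in> I \<Longrightarrow> M i j = M' i j"
  shows "psd_on I M = psd_on I M'"
  unfolding psd_on_def using assms by (simp cong: sum.cong)

lemma psd_single_zero: "psd_on {D} (\<lambda>C C'. 0)"
  unfolding psd_on_def by simp

theorem mainTheorem2:
  fixes n d w :: nat
  shows "B_bound 3 n d w = A_bound 2 n d w"
proof -
  let ?B = "{x. base_feasible 3 n d w x \<and>
       (\<forall>D \<in> codes n w (3 - 1). card D < 2 \<longrightarrow> moment_psd n w (3 - 1) D x) \<and>
       (\<forall>D \<in> codes n w 3. 2 \<le> card D \<longrightarrow> moment_psd n w 3 D x)}"
  let ?A = "{x. base_feasible 2 n d w x \<and> (\<forall>D \<in> codes n w 2. moment_psd n w 2 D x)}"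
  have c23: "codes n w 2 \<subseteq> codes n w 3" by (auto simp: codes_def)
  have "objective n w ` ?B = objective n w ` ?A"
  proof
    show "objective n w ` ?B \<subseteq> objective n w ` ?A"
    proof (rule image_mono, rule subsetI)
      fix x assume xB: "x \<in> ?B"
      have "base_feasible 2 n d w x" using xB c23 by (auto simp: base_feasible_def)
      moreover have "moment_psd n w 2 D x" if D: "D \<in> codes n w 2" for D
      proof (cases "card D < 2")
        case True thus ?thesis using xB D by auto
      next
        case False
        hence "card D = 2" using D by (auto simp: codes_def)
        moreover have "moment_psd n w 3 D x" using xB D c23 False by auto
        ultimately show ?thesis using codesD_eq[OF D] by (simp add: moment_psd_def)
      qed
      ultimately show "x \<in> ?A" by blast
    qed
  next
    show "objective n w ` ?A \<subseteq> objective n w ` ?B"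
    proof
      fix y assume "y \<in> objective n w ` ?A"
      then obtain x where xA: "x \<in> ?A" and y: "y = objective n w x" by blast
      define x' where "x' S = (if 3 \<le> card S then 0 else x S)" for S :: "nat set set"
      have obj: "objective n w x' = objective n w x"
        unfolding objective_def x'_def by simp
      have bf: "base_feasible 3 n d w x'"
        unfolding base_feasible_def
      proof (intro conjI ballI impI)
        show "x' {} = 1" using xA by (simp add: x'_def base_feasible_def)
      next
        fix S assume S: "S \<in> codes n w 3" "dmin S < enat d"
        show "x' S = 0"
        proof (cases "3 \<le> card S")
          case True thus ?thesis by (simp add: x'_def)
        next
          case False
          hence "S \<in> codes n w 2" using S by (auto simp: codes_def)
          thus ?thesis using xA S False by (auto simp: x'_def base_feasible_def)
        qed
      qed
      have m2: "moment_psd n w 2 D x'" if D: "D \<in> codes n w 2" for D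
      proof -
        have h: "moment_psd n w 2 D x" using xA D by auto
        have "psd_on (codes_D n w 2 D) (\<lambda>C C'. x' (C \<union> C')) = psd_on (codes_D n w 2 D) (\<lambda>C C'. x (C \<union> C'))"
        proof (rule psd_cong)
          fix C C' assume "C \<in> codes_D n w 2 D" "C' \<in> codes_D n w 2 D"
          from codesD_card[OF this] show "x' (C \<union> C') = x (C \<union> C')" by (simp add: x'_def)
        qed
        thus ?thesis using h unfolding moment_psd_def by simp
      qed
      have m3: "moment_psd n w 3 D x'" if D: "D \<in> codes n w 3" "2 \<le> card D" for D
      proof (cases "card D = 2")
        case True
        hence D2: "D \<in> codes n w 2" using D by (auto simp: codes_def)
        show ?thesis using m2[OF D2] codesD_eq[OF D2 True] by (simp add: moment_psd_def)
      next
        case False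
        hence c3: "card D = 3" using D by (auto simp: codes_def)
        have sub: "codes_D n w 3 D \<subseteq> {D}" using codesD_single c3 by fastforce
        have "D \<in> codes_D n w 3 D" using D c3 by (auto simp: codes_D_def)
        hence eq: "codes_D n w 3 D = {D}" using sub by blast
        have "x' (D \<union> D) = 0" using c3 by (simp add: x'_def)
        thus ?thesis unfolding moment_psd_def eq psd_on_def by simp
      qed
      have "x' \<in> ?B" using bf m2 m3 by simp
      moreover have "y = objective n w x'" using y obj by simp
      ultimately show "y \<in> objective n w ` ?B" by blast
    qed
  qed
  thus ?thesis unfolding B_bound_def A_bound_def by simp
qed

end
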